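(* Let $d\in\mathbb{Z}_{\ge1}$, $\gamma\in\mathbb{Z}_{\ge2}$, and let integers $y(\ell),x^{\mathrm{bin}}(\ell),z(\ell)$ ($\ell\in\{0,\dots,d-1\}$) and $r(\ell)$ ($\ell\in\{0,\dots,d\}$) form a solution of the constraint system $\mathcal{S}(d,\gamma)$. Then for every $\ell\in\{0,\dots,d-1\}$: $$r(\ell)=\begin{cases} r(\ell+1), & \text{if } r(\ell+1)<\gamma^{2^\ell},\\ r(\ell+1)/\gamma^{2^\ell}, & \text{if } r(\ell+1)\ge\gamma^{2^\ell},\end{cases}$$ and $r(\ell)\le\gamma^{2^\ell}-1$ for every $\ell\in\{0,\dots,d\}$.
   Context: Constraint system $\mathcal{S}(d,\gamma)$: for given integers $d\ge1$, $\gamma\ge2$, integer variables $y(\ell),x^{\mathrm{bin}}(\ell),z(\ell)$ for $\ell\in\{0,\dots,d-1\}$ and $r(\ell)$ for $\ell\in\{0,\dots,d\}$, subject to, for every $\ell\in\{0,\dots,d-1\}$ (writing $g_\ell:=\gamma^{2^\ell}$): (C1) $y(\ell)\ge0$; (C2) $y(\ell)\le r(\ell+1)/g_\ell+1/(g_\ell+1)$; (C3) $y(\ell)\ge r(\ell+1)/g_\ell-(g_\ell-1)/g_\ell$; (C4) $x^{\mathrm{bin}}(\ell)\ge0$; (C5) $x^{\mathrm{bin}}(\ell)\le1$; (C6) $x^{\mathrm{bin}}(\ell)\le y(\ell)$; (C7) $y(\ell)\le(g_\ell+1)x^{\mathrm{bin}}(\ell)$; (C8) $r(\ell)\ge0$;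 (C9) $(g_\ell-1)z(\ell)+r(\ell)=r(\ell+1)$; (C10) $z(\ell)\ge0$; (C11) $z(\ell)\ge -g_\ell+g_\ell x^{\mathrm{bin}}(\ell)+r(\ell)$; (C12) $z(\ell)\le g_\ell x^{\mathrm{bin}}(\ell)$; (C13) $z(\ell)\le r(\ell)$; and additionally $r(0)=1$, $r(d)\ge2$, $r(d)\le\gamma^{2^d-1}$. *)

theory Defs
  imports Complex_Main
begin

definition gpow :: "int \<Rightarrow> nat \<Rightarrow> int" where
  "gpow \<gamma> l = \<gamma> ^ (2 ^ l)"

definition constraint_system ::
  "nat \<Rightarrow> int \<Rightarrow> (nat \<Rightarrow> int) \<Rightarrow> (nat \<Rightarrow> int) \<Rightarrow> (nat \<Rightarrow> int) \<Rightarrow> (nat \<Rightarrow> int) \<Rightarrow> bool" where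
  "constraint_system d \<gamma> y xbin z r \<longleftrightarrow>
     (\<forall>l<d. let g = gpow \<gamma> l in
        y l \<ge> 0 \<and>
        real_of_int (y l) \<le> real_of_int (r (l+1)) / real_of_int g + 1 / (real_of_int g + 1) \<and>
        real_of_int (y l) \<ge> real_of_int (r (l+1)) / real_of_int g - (real_of_int g - 1) / real_of_int g \<and>
        xbin l \<ge> 0 \<and>
        xbin l \<le> 1 \<and>
        xbin l \<le> y l \<and>
        y l \<le> (g + 1) * xbin l \<and>
        r l \<ge> 0 \<and>
        (g - 1) * z l + r l = r (l+1) \<and>
        z l \<ge> 0 \<and>
        z l \<ge> - g + g * xbin l + r l \<and>
        z l \<le> g * xbin l \<and>
        z l \<le> r l) \<and>
     r 0 = 1 \<and> r d \<ge> 2 \<and> r d \<le> \<gamma> ^ (2 ^ d - 1)"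

end

theory Submission
  imports Defs
begin

lemma step_int:
  fixes g y x z r r' :: int
  assumes g: "g \<ge> 2"
    and c1: "y \<ge> 0"
    and c2: "real_of_int y \<le> real_of_int r' / real_of_int g + 1 / (real_of_int g + 1)"
    and c3: "real_of_int y \<ge> real_of_int r' / real_of_int g - (real_of_int g - 1) / real_of_int g"
    and c4: "x \<ge> 0" and c5: "x \<le> 1" and c6: "x \<le> y" and c7: "y \<le> (g + 1) * x"
    and c9: "(g - 1) * z + r = r'" and c10: "z \<ge> 0"
    and c11: "z \<ge> - g + g * x + r" and c12: "z \<le> g * x" and c13: "z \<le> r"
  shows "(r' < g \<and> r = r') \<or> (r' \<ge> g \<and> g * r = r')"
proof -
  have gp: "real_of_int g > 0" using g by simp
  have a: "real_of_int (y * g * (g + 1)) \<le> real_of_int (r' * (g + 1) + g)"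
  proof -
    have "real_of_int y * (real_of_int g * (real_of_int g + 1)) \<le> (real_of_int r' / real_of_int g + 1 / (real_of_int g + 1)) * (real_of_int g * (real_of_int g + 1))"
      using gp c2 by (intro mult_right_mono) auto
    also have "\<dots> = real_of_int r' * (real_of_int g + 1) + real_of_int g"
    proof -
      have h1: "real_of_int g \<noteq> 0" "real_of_int g + 1 \<noteq> 0" using gp by linarith+
      show ?thesis using h1 by (simp add: distrib_right)
    qed
    finally show ?thesis by (simp add: algebra_simps)
  qed
  hence a': "y * g * (g + 1) \<le> r' * (g + 1) + g" by linarith
  have b: "real_of_int (y * g) \<ge> real_of_int (r' - g + 1)"
    using c3 gp by (simp add: field_simps)
  hence b': "y * g \<ge> r' - g + 1" by linarith
  have up: "y * g \<le> r'"
  proof (rule ccontr)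
    assume "\<not> ?thesis"
    hence "y * g \<ge> r' + 1" by simp
    hence "y * g * (g + 1) \<ge> (r' + 1) * (g + 1)" using g by (intro mult_right_mono) auto
    thus False using a' by (simp add: algebra_simps)
  qed
  have "x = 0 \<or> x = 1" using c4 c5 by auto
  thus ?thesis
  proof
    assume x0: "x = 0"
    hence "y = 0" using c1 c7 by simp
    hence "r' < g" using b' by simp
    moreover have "z = 0" using x0 c10 c12 by simp
    ultimately show ?thesis using c9 by simp
  next
    assume x1: "x = 1"
    hence "y \<ge> 1" using c6 by simp
    hence "y * g \<ge> 1 * g" using g by (intro mult_right_mono) auto
    hence "r' \<ge> g" using up by simp
    moreover have "z = r" using x1 c11 c13 by simp
    ultimately show ?thesis using c9 by (simp add: algebra_simps)
  qed
qed

lemma step_int2: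
  fixes g y x z r r' :: int
  assumes g: "g \<ge> 2"
    and c1: "y \<ge> 0"
    and c2: "real_of_int y \<le> real_of_int r' / real_of_int g + 1 / (real_of_int g + 1)"
    and c3: "real_of_int y \<ge> real_of_int r' / real_of_int g - (real_of_int g - 1) / real_of_int g"
    and c4: "x \<ge> 0" and c5: "x \<le> 1" and c6: "x \<le> y" and c7: "y \<le> (g + 1) * x"
    and c9: "(g - 1) * z + r = r'" and c10: "z \<ge> 0"
    and c11: "z \<ge> - g + g * x + r" and c12: "z \<le> g * x" and c13: "z \<le> r"
  shows "(r' < g \<and> r = r') \<or> (r' \<ge> g \<and> g * r = r')"
  using step_int[OF assms] .

lemma gpow_ge: "\<gamma> \<ge> 2 \<Longrightarrow> gpow \<gamma> l \<ge> 2"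
proof -
  assume h: "\<gamma> \<ge> 2"
  have "\<gamma> \<le> \<gamma> ^ (2 ^ l)"
    using h by (intro self_le_power) auto
  thus ?thesis using h unfolding gpow_def by linarith
qed

theorem mainTheorem6:
  fixes d :: nat and \<gamma> :: int and y xbin z r :: "nat \<Rightarrow> int"
  assumes "d \<ge> 1" and "\<gamma> \<ge> 2"
    and "constraint_system d \<gamma> y xbin z r"
  shows "(\<forall>l<d. real_of_int (r l) =
            (if r (l+1) < gpow \<gamma> l then real_of_int (r (l+1))
             else real_of_int (r (l+1)) / real_of_int (gpow \<gamma> l)))
         \<and> (\<forall>l\<le>d. r l \<le> gpow \<gamma> l - 1)"
proof -
  have S: "\<And>l. l < d \<Longrightarrow> (r (l+1) < gpow \<gamma> l \<and> r l = r (l+1)) \<or>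
      (r (l+1) \<ge> gpow \<gamma> l \<and> gpow \<gamma> l * r l = r (l+1))"
  proof -
    fix l assume l: "l < d"
    from assms(3) l have C: "let g = gpow \<gamma> l in
        y l \<ge> 0 \<and>
        real_of_int (y l) \<le> real_of_int (r (l+1)) / real_of_int g + 1 / (real_of_int g + 1) \<and>
        real_of_int (y l) \<ge> real_of_int (r (l+1)) / real_of_int g - (real_of_int g - 1) / real_of_int g \<and>
        xbin l \<ge> 0 \<and>
        xbin l \<le> 1 \<and>
        xbin l \<le> y l \<and>
        y l \<le> (g + 1) * xbin l \<and>
        r l \<ge> 0 \<and>
        (g - 1) * z l + r l = r (l+1) \<and>
        z l \<ge> 0 \<and>
        z l \<ge> - g + g * xbin l + r l \<and>
        z l \<le> g * xbin l \<and>
        z l \<le> r l" unfolding constraint_system_def by blast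
    show "(r (l+1) < gpow \<gamma> l \<and> r l = r (l+1)) \<or>
      (r (l+1) \<ge> gpow \<gamma> l \<and> gpow \<gamma> l * r l = r (l+1))"
      using C gpow_ge[OF assms(2), of l] unfolding Let_def
      by (intro step_int[where y="y l" and x="xbin l" and z="z l"]) auto
  qed
  have P1: "\<forall>l<d. real_of_int (r l) =
            (if r (l+1) < gpow \<gamma> l then real_of_int (r (l+1))
             else real_of_int (r (l+1)) / real_of_int (gpow \<gamma> l))"
  proof (intro allI impI)
    fix l assume l: "l < d"
    have gp: "real_of_int (gpow \<gamma> l) > 0" using gpow_ge[OF assms(2), of l] by simp
    from S[OF l] show "real_of_int (r l) =
            (if r (l+1) < gpow \<gamma> l then real_of_int (r (l+1))
             else real_of_int (r (l+1)) / real_of_int (gpow \<gamma> l))"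
    proof
      assume h: "r (l+1) \<ge> gpow \<gamma> l \<and> gpow \<gamma> l * r l = r (l+1)"
      hence "real_of_int (r (l+1)) = real_of_int (gpow \<gamma> l) * real_of_int (r l)"
        by (metis of_int_mult)
      thus ?thesis using h gp by simp
    qed simp
  qed
  have rd: "r d \<le> gpow \<gamma> d - 1"
  proof -
    have r1: "r d \<le> \<gamma> ^ (2 ^ d - 1)" using assms(3) unfolding constraint_system_def by blast
    have e: "(2::nat) ^ d = Suc (2 ^ d - 1)" by simp
    have "\<gamma> ^ (2 ^ d) = \<gamma> * \<gamma> ^ (2 ^ d - 1)" by (metis e power_Suc)
    moreover have "\<gamma> ^ (2 ^ d - 1) \<ge> 1" using assms(2) by simp
    moreover have "\<gamma> * \<gamma> ^ (2 ^ d - 1) \<ge> 2 * \<gamma> ^ (2 ^ d - 1)"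
      using assms(2) by (intro mult_right_mono) auto
    ultimately have "\<gamma> ^ (2 ^ d) \<ge> \<gamma> ^ (2 ^ d - 1) + 1" by linarith
    thus ?thesis using r1 unfolding gpow_def by simp
  qed
  have P2: "\<forall>k\<le>d. r (d - k) \<le> gpow \<gamma> (d - k) - 1"
  proof (intro allI impI)
    fix k show "k \<le> d \<Longrightarrow> r (d - k) \<le> gpow \<gamma> (d - k) - 1"
    proof (induction k)
      case 0 thus ?case using rd by simp
    next
      case (Suc k)
      define l where "l = d - Suc k"
      have l: "l < d" and l1: "d - k = l + 1" using Suc.prems unfolding l_def by auto
      have IH: "r (l+1) \<le> gpow \<gamma> (l+1) - 1" using Suc l1 by simp
      have sq: "gpow \<gamma> (l+1) = gpow \<gamma> l * gpow \<gamma> l"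
        unfolding gpow_def by (simp add: mult_2 power_add)
      have g2: "gpow \<gamma> l \<ge> 2" using gpow_ge[OF assms(2)] .
      from S[OF l] have "r l \<le> gpow \<gamma> l - 1"
      proof
        assume h: "r (l+1) \<ge> gpow \<gamma> l \<and> gpow \<gamma> l * r l = r (l+1)"
        hence "gpow \<gamma> l * r l < gpow \<gamma> l * gpow \<gamma> l" using IH sq by simp
        hence "r l < gpow \<gamma> l" using g2 by (simp add: mult_less_cancel_left)
        thus ?thesis by simp
      qed simp
      thus ?case unfolding l_def by simp
    qed
  qed
  have "\<forall>l\<le>d. r l \<le> gpow \<gamma> l - 1"
  proof (intro allI impI)
    fix l assume "l \<le> d"
    thus "r l \<le> gpow \<gamma> l - 1" using P2[rule_format, of "d - l"] by simp
  qed
  with P1 show ?thesis by blast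
qed

end
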